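(* Let $R$ be a commutative Bezout domain of stable range 1.5, let $n\ge 2$, let $a_1,\dots,a_n\in R$ with $(a_1,\dots,a_n)=1$, let $\psi\in R$ be a fixed nonzero element, and fix an index $i$ with $2\le i\le n$. Then there exist $u_1,\dots,u_n\in R$ satisfying simultaneously: (1) $u_1a_1+\dots+u_na_n=1$; (2) $(u_1,\dots,u_i)=1$; (3) $(u_i,\psi)=1$.
   Context: A commutative Bezout domain is a commutative integral domain with $1\ne0$ in which every finitely generated ideal is principal; $(a,b,\dots)$ denotes a greatest common divisor. A commutative Bezout domain $R$ has stable range 1.5 if for all $a,b\in R$ and all $c\in R\setminus\{0\}$ with $(a,b,c)=1$ there exists $r\in R$ with $(a+br,c)=1$. *)

theory Defs
  imports Main
begin

definition ideal_gen :: "'a::comm_ring_1 set \<Rightarrow> 'a set" where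
  "ideal_gen S = {(\<Sum>s\<in>S. c s * s) | c. True}"

text \<open>Commutative Bezout domain: an integral domain (type class idom, which includes
  commutativity and 1 \<noteq> 0) in which every finitely generated ideal is principal.\<close>
definition bezout_domain :: "'a::idom itself \<Rightarrow> bool" where
  "bezout_domain _ \<longleftrightarrow>
     (\<forall>S::'a set. finite S \<longrightarrow> (\<exists>d. ideal_gen S = {d * r | r. True}))"

definition gcd_one :: "'a::idom set \<Rightarrow> bool" where
  "gcd_one S \<longleftrightarrow> (\<forall>d. (\<forall>x\<in>S. d dvd x) \<longrightarrow> d dvd 1)"

definition stable_range_1_5 :: "'a::idom itself \<Rightarrow> bool" where
  "stable_range_1_5 _ \<longleftrightarrow>
     (\<forall>a b c::'a. c \<noteq> 0 \<longrightarrow> gcd_one {a, b, c} \<longrightarrow> (\<exists>r. gcd_one {a + b * r, c}))"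

end

theory Submission
  imports Defs
begin

lemma bez_comb:
  fixes a :: "nat \<Rightarrow> 'a::idom"
  assumes bz: "bezout_domain TYPE('a)" and fin: "finite A" and g: "gcd_one (a ` A)"
  shows "\<exists>v. (\<Sum>k\<in>A. v k * a k) = 1"
proof -
  obtain d where d: "ideal_gen (a`A) = {d * r | r. True}"
    using bz fin unfolding bezout_domain_def by blast
  have "\<forall>s\<in>a`A. d dvd s"
  proof
    fix s assume s: "s \<in> a`A"
    have "(\<Sum>x\<in>a`A. (if x = s then 1 else 0) * x) = s"
    proof -
      have "(\<Sum>x\<in>a`A. (if x = s then 1 else 0) * x) = (\<Sum>x\<in>a`A. if x = s then x else 0)"
        by (rule sum.cong) auto
      thus ?thesis using s fin by (simp add: sum.delta)
    qed
    hence "s \<in> ideal_gen (a`A)" unfolding ideal_gen_def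
      by (intro CollectI exI[of _ "\<lambda>x. if x = s then 1 else 0"]) simp
    thus "d dvd s" using d by auto
  qed
  hence "d dvd 1" using g unfolding gcd_one_def by blast
  then obtain e where "1 = d * e" by (auto elim: dvdE)
  hence "1 \<in> ideal_gen (a`A)" using d by blast
  then obtain c where c: "(\<Sum>s\<in>a`A. c s * s) = 1" unfolding ideal_gen_def by auto
  define B where "B = inv_into A a ` (a ` A)"
  have BA: "B \<subseteq> A" unfolding B_def by (auto intro: inv_into_into)
  have inj: "inj_on a B" unfolding B_def
    by (auto simp: inj_on_def f_inv_into_f)
  have img: "a ` B = a ` A" unfolding B_def
    by (auto simp: f_inv_into_f image_iff) (metis f_inv_into_f imageI)
  define v where "v k = (if k \<in> B then c (a k) else 0)" for k
  have "(\<Sum>k\<in>A. v k * a k) = (\<Sum>k\<in>B. v k * a k)"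
    using BA fin by (intro sum.mono_neutral_right) (auto simp: v_def)
  also have "\<dots> = (\<Sum>k\<in>B. c (a k) * a k)" by (simp add: v_def)
  also have "\<dots> = (\<Sum>s\<in>a`B. c s * s)" using inj by (simp add: sum.reindex)
  also have "\<dots> = 1" using img c by simp
  finally show ?thesis by blast
qed

lemma sum_upd:
  fixes a v :: "nat \<Rightarrow> 'a::comm_ring_1"
  assumes "finite A" "j \<in> A"
  shows "(\<Sum>k\<in>A. (v(j:=x)) k * a k) = (\<Sum>k\<in>A. v k * a k) - v j * a j + x * a j"
proof -
  have "(\<Sum>k\<in>A. (v(j:=x)) k * a k) = x * a j + (\<Sum>k\<in>A-{j}. (v(j:=x)) k * a k)"
    using assms by (simp add: sum.remove)
  also have "(\<Sum>k\<in>A-{j}. (v(j:=x)) k * a k) = (\<Sum>k\<in>A-{j}. v k * a k)"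
    by (rule sum.cong) auto
  also have "(\<Sum>k\<in>A. v k * a k) = v j * a j + (\<Sum>k\<in>A-{j}. v k * a k)"
    using assms by (simp add: sum.remove)
  ultimately show ?thesis by (simp add: algebra_simps)
qed

theorem theorem1p9:
  fixes a :: "nat \<Rightarrow> 'a::idom" and \<psi> :: 'a and n i :: nat
  assumes "bezout_domain TYPE('a)"
    and "stable_range_1_5 TYPE('a)"
    and "n \<ge> 2"
    and "gcd_one (a ` {1..n})"
    and "\<psi> \<noteq> 0"
    and "2 \<le> i" and "i \<le> n"
  shows "\<exists>u :: nat \<Rightarrow> 'a.
           (\<Sum>k = 1..n. u k * a k) = 1
         \<and> gcd_one (u ` {1..i})
         \<and> gcd_one {u i, \<psi>}"
proof -
  let ?A = "{1..n}"
  obtain v0 where v0: "(\<Sum>k\<in>?A. v0 k * a k) = 1"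
    using bez_comb[OF assms(1) _ assms(4)] by auto
  have "\<exists>v. (\<Sum>k\<in>?A. v k * a k) = 1 \<and> v 1 \<noteq> 0"
  proof (cases "v0 1 = 0")
    case False thus ?thesis using v0 by blast
  next
    case True
    have one: "1 \<in> ?A" using assms(3) by simp
    show ?thesis
    proof (cases "a 1 = 0")
      case True
      thus ?thesis using sum_upd[of ?A 1 v0 1 a] one v0 by (intro exI[of _ "v0(1:=1)"]) simp
    next
      case a1: False
      have "\<exists>k\<in>?A. k \<noteq> 1 \<and> a k \<noteq> 0"
      proof (rule ccontr)
        assume "\<not> ?thesis"
        hence "(\<Sum>k\<in>?A. v0 k * a k) = (\<Sum>k\<in>{1}. v0 k * a k)"
          using one by (intro sum.mono_neutral_right) auto
        thus False using v0 True by simp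
      qed
      then obtain k where k: "k \<in> ?A" "k \<noteq> 1" "a k \<noteq> 0" by blast
      define w where "w = (v0(k := v0 k - a 1))(1 := a k)"
      have "(\<Sum>j\<in>?A. w j * a j) = 1"
        unfolding w_def using sum_upd[of ?A 1 "v0(k := v0 k - a 1)" "a k" a]
          sum_upd[of ?A k v0 "v0 k - a 1" a] one k v0 True
        by (simp add: algebra_simps)
      moreover have "w 1 \<noteq> 0" using k by (simp add: w_def)
      ultimately show ?thesis by blast
    qed
  qed
  then obtain v where v: "(\<Sum>k\<in>?A. v k * a k) = 1" and v1: "v 1 \<noteq> 0" by blast
  have iA: "i \<in> ?A" using assms by simp
  define x where "x = v i"
  define d where "d = (\<Sum>k\<in>?A-{i}. v k * a k)"
  have xd: "x * a i + d = 1" using v iA unfolding x_def d_def by (simp add: sum.remove)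
  have "gcd_one {x, d, \<psi> * v 1}" unfolding gcd_one_def
  proof (intro allI impI)
    fix \<delta> assume "\<forall>y\<in>{x, d, \<psi> * v 1}. \<delta> dvd y"
    hence "\<delta> dvd x * a i + d" by auto
    thus "\<delta> dvd 1" using xd by simp
  qed
  moreover have "\<psi> * v 1 \<noteq> 0" using assms(5) v1 by simp
  ultimately obtain t where t: "gcd_one {x + d * t, \<psi> * v 1}"
    using assms(2) unfolding stable_range_1_5_def by blast
  define u where "u k = (if k = i then x + d * t else (1 - a i * t) * v k)" for k
  have "(\<Sum>k\<in>?A. u k * a k) = u i * a i + (\<Sum>k\<in>?A-{i}. u k * a k)"
    using iA by (simp add: sum.remove)
  also have "(\<Sum>k\<in>?A-{i}. u k * a k) = (\<Sum>k\<in>?A-{i}. (1 - a i * t) * (v k * a k))"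
    by (rule sum.cong) (auto simp: u_def)
  also have "\<dots> = (1 - a i * t) * d" by (simp add: d_def sum_distrib_left)
  finally have S: "(\<Sum>k\<in>?A. u k * a k) = 1"
    using xd by (simp add: u_def algebra_simps)
  have ui: "u i = x + d * t" by (simp add: u_def)
  have u1: "u 1 = (1 - a i * t) * v 1" using assms(6) by (simp add: u_def)
  have key: "v 1 = a i * u i * v 1 + d * u 1"
  proof -
    have "a i * u i * v 1 + d * u 1 = (x * a i + d) * v 1"
      using assms(6) by (simp add: u_def algebra_simps)
    thus ?thesis using xd by simp
  qed
  have G1: "gcd_one (u ` {1..i})" unfolding gcd_one_def
  proof (intro allI impI)
    fix \<delta> assume h: "\<forall>y\<in>u ` {1..i}. \<delta> dvd y"
    have "\<delta> dvd u i" "\<delta> dvd u 1" using h assms(6) by auto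
    hence "\<delta> dvd v 1" by (subst key) simp
    hence "\<delta> dvd \<psi> * v 1" by simp
    thus "\<delta> dvd 1" using t \<open>\<delta> dvd u i\<close> ui unfolding gcd_one_def by auto
  qed
  have G2: "gcd_one {u i, \<psi>}" unfolding gcd_one_def
  proof (intro allI impI)
    fix \<delta> assume h: "\<forall>y\<in>{u i, \<psi>}. \<delta> dvd y"
    hence "\<delta> dvd \<psi> * v 1" by simp
    thus "\<delta> dvd 1" using t h ui unfolding gcd_one_def by auto
  qed
  show ?thesis using S G1 G2 by blast
qed

end
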